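(* Let $A\in\mathbb{C}^{m\times n}$ be such that $\mathrm{rank}(AA^{\sim})=\mathrm{rank}(A^{\sim}A)=\mathrm{rank}(A)$. Then for arbitrary nonnegative integers $k$ and $l$, $$A^{\mathfrak{m}}=(A^{\sim}A)^kA^{\sim}\left[(A^{\sim}A)^{k+l+1}A^{\sim}\right]^{(1)}(A^{\sim}A)^lA^{\sim},$$ where $\left[(A^{\sim}A)^{k+l+1}A^{\sim}\right]^{(1)}$ is any $\{1\}$-inverse of $(A^{\sim}A)^{k+l+1}A^{\sim}$.
   Context: For a positive integer $k$, the Minkowski metric matrix of order $k$ is $G_k=\mathrm{diag}(1,-I_{k-1})$ (with $G_1=(1)$). For $M\in\mathbb{C}^{p\times q}$, the Minkowski adjoint is $M^{\sim}=G_qM^*G_p$, where $M^*$ is the conjugate transpose. The Minkowski inverse of $A\in\mathbb{C}^{m\times n}$, denoted $A^{\mathfrak{m}}$, is the (unique) matrix $X\in\mathbb{C}^{n\times m}$ with $AXA=A$, $XAX=X$, $(AX)^{\sim}=AX$, $(XA)^{\sim}=XA$; it exists under the stated rank hypothesis. A $\{1\}$-inverse of $M$ is any $M^{(1)}$ with $MM^{(1)}M=M$; $(A^{\sim}A)^0=I_n$. *)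

theory Defs
  imports "Jordan_Normal_Form.Schur_Decomposition" "Jordan_Normal_Form.DL_Rank"
begin

definition minkowski_G :: "nat \<Rightarrow> complex mat" where
  "minkowski_G k = mat k k (\<lambda>(i,j). if i = j then (if i = 0 then 1 else -1) else 0)"

definition mink_adj :: "complex mat \<Rightarrow> complex mat" where
  "mink_adj M = minkowski_G (dim_col M) * mat_adjoint M * minkowski_G (dim_row M)"

definition crank :: "complex mat \<Rightarrow> nat" where
  "crank M = vec_space.rank (dim_row M) M"

definition is_mink_inverse :: "complex mat \<Rightarrow> complex mat \<Rightarrow> bool" where
  "is_mink_inverse A X \<longleftrightarrow> X \<in> carrier_mat (dim_col A) (dim_row A) \<and>
     A * X * A = A \<and> X * A * X = X \<and>
     mink_adj (A * X) = A * X \<and> mink_adj (X * A) = X * A"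

definition mink_inverse :: "complex mat \<Rightarrow> complex mat" where
  "mink_inverse A = (THE X. is_mink_inverse A X)"

end

theory Submission
  imports Defs
begin


lemma (in vectorspace) dim0_carrier:
  assumes fd: "fin_dim" and d: "dim = 0"
  shows "carrier V = {\<zero>\<^bsub>V\<^esub>}"
proof -
  obtain b where b: "finite b" "basis b" using finite_basis_exists[OF fd] by blast
  have "card b = 0" using dim_basis[OF b] d by simp
  hence "b = {}" using b(1) by simp
  hence "span {} = carrier V" using b(2) unfolding basis_def by simp
  thus ?thesis using span_empty by simp
qed

lemma (in vectorspace) subspace_fin_dim:
  assumes U: "VectorSpace.subspace K U V" and fd: fin_dim
  shows "vectorspace.fin_dim K (vs U)"
proof -
  interpret U: vectorspace K "vs U" using subspace_is_vs[OF U] .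
  have sub: "submodule K U V" using U unfolding subspace_def by auto
  have UC: "U \<subseteq> carrier V" using sub unfolding submodule_def by auto
  define P where "P = (\<lambda>S. S \<subseteq> carrier (vs U) \<and> U.lin_indpt S)"
  have bound: "finite S \<and> card S \<le> dim" if "P S" for S
  proof -
    have S: "S \<subseteq> U" using that unfolding P_def by auto
    have "lin_indpt S" using that span_li_not_depend(2)[OF S sub] unfolding P_def by auto
    with S UC show ?thesis using li_le_dim[OF fd, of S] by auto
  qed
  have P0: "P {}" unfolding P_def
    using U.module.finite_lin_indpt2 by auto
  obtain S where S: "finite S" "maximal S P" using maximal_exists[of P dim "{}", OF bound P0] by blast
  have "U.gen_set S" using U.max_li_is_gen S(2) unfolding P_def by auto
  moreover have "S \<subseteq> carrier (vs U)" using S(2) unfolding maximal_def P_def by auto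
  ultimately show ?thesis unfolding U.fin_dim_def using S(1) by blast
qed


lemma rank_mult_inj:
  fixes P Q :: "'a::field mat"
  assumes P: "P \<in> carrier_mat p m" and Q: "Q \<in> carrier_mat m q"
  and r: "vec_space.rank p (P * Q) = vec_space.rank m Q"
  and x: "x \<in> carrier_vec q" and z: "P *\<^sub>v (Q *\<^sub>v x) = 0\<^sub>v p"
  shows "Q *\<^sub>v x = 0\<^sub>v m"
proof -
  interpret V: vec_space "TYPE('a)" m .
  interpret W: vec_space "TYPE('a)" p .
  define SQ where "SQ = V.span (set (cols Q))"
  define SPQ where "SPQ = W.span (set (cols (P*Q)))"
  have PQ: "P * Q \<in> carrier_mat p q" using P Q by auto
  have SQ_eq: "SQ = {y \<in> carrier_vec m. \<exists>x\<in>carrier_vec q. Q *\<^sub>v x = y}"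
    using V.col_space_eq[OF Q] Q unfolding V.col_space_def SQ_def by auto
  have SPQ_eq: "SPQ = {y \<in> carrier_vec p. \<exists>x\<in>carrier_vec q. (P * Q) *\<^sub>v x = y}"
    using W.col_space_eq[OF PQ] P Q unfolding W.col_space_def SPQ_def by auto
  have subQ: "VectorSpace.subspace class_ring SQ V.V" unfolding SQ_def
    by (rule V.span_is_subspace, insert cols_dim[of Q] Q, auto)
  have subPQ: "VectorSpace.subspace class_ring SPQ W.V" unfolding SPQ_def
    by (rule W.span_is_subspace, insert cols_dim[of "P*Q"] P Q, auto)
  interpret SV: vectorspace class_ring "V.vs SQ" using V.subspace_is_vs[OF subQ] .
  interpret SW: vectorspace class_ring "W.vs SPQ" using W.subspace_is_vs[OF subPQ] .
  have hom: "(\<lambda>v. P *\<^sub>v v) \<in> LinearCombinations.module_hom class_ring (V.vs SQ) (W.vs SPQ)"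
    unfolding LinearCombinations.module_hom_def SQ_eq SPQ_eq
    using P Q by (auto simp: mult_add_distrib_mat_vec mult_mat_vec assoc_mult_mat_vec)
  interpret T: linear_map class_ring "V.vs SQ" "W.vs SPQ" "\<lambda>v. P *\<^sub>v v"
    unfolding linear_map_def mod_hom_def mod_hom_axioms_def
    using SV.vectorspace_axioms SW.vectorspace_axioms hom
    by (auto simp: vectorspace_def)
  have fdQ: "SV.fin_dim" unfolding SQ_def using V.fin_dim_span_cols[OF Q] .
  note rn = T.rank_nullity[OF fdQ]
  have imT: "T.imT = SPQ"
    unfolding T.im_def unfolding SQ_eq SPQ_eq using P Q by (auto simp: assoc_mult_mat_vec)
  have d1: "vectorspace.dim class_ring (SW.vs T.imT) = vec_space.rank p (P * Q)"
    unfolding imT W.rank_def SPQ_def by simp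
  have d2: "SV.dim = vec_space.rank m Q"
    unfolding V.rank_def SQ_def by simp
  have d0: "vectorspace.dim class_ring (SV.vs T.kerT) = 0" using rn d1 d2 r by simp
  have fdK: "vectorspace.fin_dim class_ring (SV.vs T.kerT)"
    by (rule SV.subspace_fin_dim[OF T.kerT_is_subspace fdQ])
  interpret K: vectorspace class_ring "SV.vs T.kerT"
    using SV.subspace_is_vs[OF T.kerT_is_subspace] .
  have "carrier (SV.vs T.kerT) = {\<zero>\<^bsub>SV.vs T.kerT\<^esub>}"
    by (rule K.dim0_carrier[OF fdK d0])
  hence "carrier (SV.vs T.kerT) = {\<zero>\<^bsub>V.vs SQ\<^esub>}" by simp
  hence inj: "inj_on (\<lambda>v. P *\<^sub>v v) SQ" using T.Ke0_imp_inj by simp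
  have in1: "Q *\<^sub>v x \<in> SQ" unfolding SQ_eq using x Q by auto
  have in2: "0\<^sub>v m \<in> SQ" unfolding SQ_eq using Q by (auto intro!: bexI[of _ "0\<^sub>v q"])
  have P0: "P *\<^sub>v 0\<^sub>v m = 0\<^sub>v p"
    by (rule eq_vecI, insert P, auto simp: row_def)
  have "P *\<^sub>v (Q *\<^sub>v x) = P *\<^sub>v 0\<^sub>v m" using z P0 by simp
  thus ?thesis using inj_onD[OF inj _ in1 in2] by simp
qed
lemma rank_mult_col:
  fixes P Q :: "'a::field mat"
  assumes P: "P \<in> carrier_mat p m" and Q: "Q \<in> carrier_mat m q"
  and r: "vec_space.rank p (P * Q) = vec_space.rank p P"
  shows "\<exists>V \<in> carrier_mat q m. P = P * Q * V"
proof -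
  interpret W: vec_space "TYPE('a)" p .
  define SP where "SP = W.span (set (cols P))"
  define SPQ where "SPQ = W.span (set (cols (P*Q)))"
  have PQ: "P * Q \<in> carrier_mat p q" using P Q by auto
  have SP_eq: "SP = {y \<in> carrier_vec p. \<exists>x\<in>carrier_vec m. P *\<^sub>v x = y}"
    using W.col_space_eq[OF P] P unfolding W.col_space_def SP_def by auto
  have SPQ_eq: "SPQ = {y \<in> carrier_vec p. \<exists>x\<in>carrier_vec q. (P * Q) *\<^sub>v x = y}"
    using W.col_space_eq[OF PQ] P Q unfolding W.col_space_def SPQ_def by auto
  have sub: "SPQ \<subseteq> SP" unfolding SP_eq SPQ_eq using P Q by (auto simp: assoc_mult_mat_vec)
  have subP: "VectorSpace.subspace class_ring SP W.V" unfolding SP_def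
    by (rule W.span_is_subspace, insert cols_dim[of P] P, auto)
  have subPQ: "VectorSpace.subspace class_ring SPQ W.V" unfolding SPQ_def
    by (rule W.span_is_subspace, insert cols_dim[of "P*Q"] P Q, auto)
  have smP: "submodule class_ring SP W.V" using subP unfolding subspace_def by auto
  have smPQ: "submodule class_ring SPQ W.V" using subPQ unfolding subspace_def by auto
  interpret SV: vectorspace class_ring "W.vs SP" using W.subspace_is_vs[OF subP] .
  interpret SW: vectorspace class_ring "W.vs SPQ" using W.subspace_is_vs[OF subPQ] .
  have fdP: "SV.fin_dim" unfolding SP_def using W.fin_dim_span_cols[OF P] .
  have fdPQ: "SW.fin_dim" unfolding SPQ_def using W.fin_dim_span_cols[OF PQ] .
  obtain b where b: "finite b" "SW.basis b" using SW.finite_basis_exists[OF fdPQ] by blast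
  have bS: "b \<subseteq> SPQ" using b(2) unfolding SW.basis_def by auto
  have cb: "card b = vec_space.rank p P"
    using SW.dim_basis[OF b] r unfolding W.rank_def SPQ_def by simp
  have li: "W.lin_indpt b" using b(2) W.span_li_not_depend(2)[OF bS smPQ] unfolding SW.basis_def by auto
  have li2: "SV.lin_indpt b" using li W.span_li_not_depend(2)[of b SP] bS sub smP by auto
  have "SV.basis b"
    by (rule SV.dim_li_is_basis[OF fdP b(1) _ li2], insert bS sub cb, auto simp: W.rank_def SP_def)
  hence "SV.span b = SP" unfolding SV.basis_def by auto
  hence "W.span b = SP" using W.span_li_not_depend(1)[of b SP] bS sub smP by auto
  hence SPsub: "SP \<subseteq> SPQ" using W.span_is_subset[OF bS smPQ] by auto
  have "\<forall>j < m. \<exists>x \<in> carrier_vec q. (P * Q) *\<^sub>v x = col P j"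
  proof (intro allI impI)
    fix j assume j: "j < m"
    have "col P j \<in> SP" unfolding SP_def using j P
      by (intro W.span_mem, auto simp: cols_def)
    thus "\<exists>x \<in> carrier_vec q. (P * Q) *\<^sub>v x = col P j" using SPsub unfolding SPQ_eq by auto
  qed
  then obtain xs where xs: "\<And>j. j < m \<Longrightarrow> xs j \<in> carrier_vec q \<and> (P * Q) *\<^sub>v xs j = col P j"
    by metis
  define V where "V = mat q m (\<lambda>(i,j). xs j $ i)"
  have V: "V \<in> carrier_mat q m" unfolding V_def by auto
  have colV: "col V j = xs j" if "j < m" for j
    using xs[OF that] that unfolding V_def by (auto intro!: eq_vecI)
  have "P * Q * V = P"
  proof (rule eq_matI)
    fix i j assume i: "i < dim_row P" and j: "j < dim_col P"
    have jm: "j < m" using j P by auto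
    have "(P * Q * V) $$ (i, j) = row (P * Q) i \<bullet> col V j"
      by (rule index_mult_mat(1), insert i j P Q V, auto)
    also have "\<dots> = ((P * Q) *\<^sub>v xs j) $ i" using colV[OF jm] i P by simp
    also have "\<dots> = P $$ (i,j)" using xs[OF jm] i j by simp
    finally show "(P * Q * V) $$ (i, j) = P $$ (i, j)" .
  qed (insert P Q V, auto)
  thus ?thesis using V by (intro bexI[of _ V], simp_all)
qed



definition sg :: "nat \<Rightarrow> complex" where "sg i = (if i = 0 then 1 else -1)"

lemma sg_sq[simp]: "sg i * sg i = 1" unfolding sg_def by auto
lemma cnj_sg[simp]: "cnj (sg i) = sg i" unfolding sg_def by auto

lemma G_carrier[simp]: "minkowski_G k \<in> carrier_mat k k"
  unfolding minkowski_G_def by auto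

lemma G_dims[simp]: "dim_row (minkowski_G k) = k" "dim_col (minkowski_G k) = k"
  unfolding minkowski_G_def by auto

lemma G_index: "i < k \<Longrightarrow> j < k \<Longrightarrow> minkowski_G k $$ (i,j) = (if i = j then sg i else 0)"
  unfolding minkowski_G_def sg_def by auto

lemma adjoint_dims[simp]: "dim_row (mat_adjoint M) = dim_col M" "dim_col (mat_adjoint M) = dim_row M"
  unfolding mat_adjoint_def by auto

lemma adjoint_index: "i < dim_col M \<Longrightarrow> j < dim_row M \<Longrightarrow> mat_adjoint M $$ (i,j) = cnj (M $$ (j,i))"
  unfolding mat_adjoint_def by (auto simp: mat_of_rows_def)

lemma GX: "dim_row X = k \<Longrightarrow> i < k \<Longrightarrow> j < dim_col X \<Longrightarrow> (minkowski_G k * X) $$ (i,j) = sg i * X $$ (i,j)"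
proof -
  assume d: "dim_row X = k" and i: "i < k" and j: "j < dim_col X"
  have "(minkowski_G k * X) $$ (i,j) = (\<Sum>l = 0..<k. minkowski_G k $$ (i,l) * X $$ (l,j))"
    using d i j by (simp add: scalar_prod_def)
  also have "\<dots> = (\<Sum>l = 0..<k. if l = i then sg i * X $$ (i,j) else 0)"
    by (rule sum.cong, auto simp: G_index i)
  also have "\<dots> = sg i * X $$ (i,j)" using i by simp
  finally show ?thesis .
qed

lemma XG: "dim_col X = k \<Longrightarrow> i < dim_row X \<Longrightarrow> j < k \<Longrightarrow> (X * minkowski_G k) $$ (i,j) = X $$ (i,j) * sg j"
proof -
  assume d: "dim_col X = k" and i: "i < dim_row X" and j: "j < k"
  have "(X * minkowski_G k) $$ (i,j) = (\<Sum>l = 0..<k. X $$ (i,l) * minkowski_G k $$ (l,j))"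
    using d i j by (simp add: scalar_prod_def)
  also have "\<dots> = (\<Sum>l = 0..<k. if l = j then X $$ (i,j) * sg j else 0)"
    by (rule sum.cong, auto simp: G_index j)
  also have "\<dots> = X $$ (i,j) * sg j" using j by simp
  finally show ?thesis .
qed

lemma mink_adj_dims[simp]: "dim_row (mink_adj M) = dim_col M" "dim_col (mink_adj M) = dim_row M"
  unfolding mink_adj_def by simp_all

lemma mink_adj_carrier: "M \<in> carrier_mat a b \<Longrightarrow> mink_adj M \<in> carrier_mat b a"
  unfolding carrier_mat_def by simp

lemma mink_adj_index: "i < dim_col M \<Longrightarrow> j < dim_row M \<Longrightarrow>
  mink_adj M $$ (i,j) = sg i * cnj (M $$ (j,i)) * sg j"
proof -
  assume i: "i < dim_col M" and j: "j < dim_row M"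
  have "mink_adj M $$ (i,j) = (minkowski_G (dim_col M) * mat_adjoint M) $$ (i,j) * sg j"
    unfolding mink_adj_def by (rule XG) (simp_all add: i j)
  also have "(minkowski_G (dim_col M) * mat_adjoint M) $$ (i,j) = sg i * mat_adjoint M $$ (i,j)"
    by (rule GX) (simp_all add: i j)
  also have "mat_adjoint M $$ (i,j) = cnj (M $$ (j,i))" by (rule adjoint_index[OF i j])
  finally show ?thesis .
qed

lemma mink_adj_mult:
  assumes P: "P \<in> carrier_mat p q" and Q: "Q \<in> carrier_mat q r"
  shows "mink_adj (P * Q) = mink_adj Q * mink_adj P"
proof (rule eq_matI)
  fix i j assume i: "i < dim_row (mink_adj Q * mink_adj P)" and j: "j < dim_col (mink_adj Q * mink_adj P)"
  have i': "i < r" and j': "j < p" using i j P Q by auto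
  have "(mink_adj Q * mink_adj P) $$ (i,j) = (\<Sum>k = 0..<q. mink_adj Q $$ (i,k) * mink_adj P $$ (k,j))"
    using i j P Q by (simp add: scalar_prod_def)
  also have "\<dots> = (\<Sum>k = 0..<q. sg i * sg j * (cnj (P $$ (j,k)) * cnj (Q $$ (k,i))))"
  proof (rule sum.cong[OF refl])
    fix k assume k: "k \<in> {0..<q}"
    have "mink_adj Q $$ (i,k) * mink_adj P $$ (k,j) =
      (sg i * cnj (Q $$ (k,i)) * sg k) * (sg k * cnj (P $$ (j,k)) * sg j)"
      using k i' j' P Q by (simp add: mink_adj_index)
    also have "\<dots> = sg i * sg j * (cnj (P $$ (j,k)) * cnj (Q $$ (k,i))) * (sg k * sg k)"
      by (simp only: mult_ac)
    finally show "mink_adj Q $$ (i,k) * mink_adj P $$ (k,j) = sg i * sg j * (cnj (P $$ (j,k)) * cnj (Q $$ (k,i)))"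
      by simp
  qed
  also have "\<dots> = sg i * cnj (\<Sum>k = 0..<q. P $$ (j,k) * Q $$ (k,i)) * sg j"
    by (simp add: sum_distrib_left mult_ac)
  also have "\<dots> = mink_adj (P * Q) $$ (i,j)"
    using i' j' P Q by (simp add: mink_adj_index scalar_prod_def)
  finally show "mink_adj (P * Q) $$ (i,j) = (mink_adj Q * mink_adj P) $$ (i,j)" ..
next
  show "dim_row (mink_adj (P * Q)) = dim_row (mink_adj Q * mink_adj P)" by simp
next
  show "dim_col (mink_adj (P * Q)) = dim_col (mink_adj Q * mink_adj P)" by simp
qed

lemma mink_adj_adj[simp]: "mink_adj (mink_adj M) = M"
proof (rule eq_matI)
  fix i j assume i: "i < dim_row M" and j: "j < dim_col M"
  have "mink_adj (mink_adj M) $$ (i,j) = sg i * cnj (mink_adj M $$ (j,i)) * sg j"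
    by (rule mink_adj_index, insert i j, simp_all)
  also have "mink_adj M $$ (j,i) = sg j * cnj (M $$ (i,j)) * sg i"
    by (rule mink_adj_index, insert i j, simp_all)
  also have "sg i * cnj (sg j * cnj (M $$ (i,j)) * sg i) * sg j = (sg i * sg i) * (sg j * sg j) * M $$ (i,j)"
    by (simp only: complex_cnj_mult cnj_sg complex_cnj_cnj mult_ac)
  finally show "mink_adj (mink_adj M) $$ (i,j) = M $$ (i,j)" by (simp only: sg_sq mult_1_left)
next
  show "dim_row (mink_adj (mink_adj M)) = dim_row M" by (simp only: mink_adj_dims)
next
  show "dim_col (mink_adj (mink_adj M)) = dim_col M" by (simp only: mink_adj_dims)
qed



lemma pow_mat_add:
  fixes M :: "'a::semiring_1 mat"
  assumes M: "M \<in> carrier_mat n n"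
  shows "M ^\<^sub>m a * M ^\<^sub>m b = M ^\<^sub>m (a + b)"
proof (induction b)
  case 0 then show ?case using M by simp
next
  case (Suc b)
  have "M ^\<^sub>m a * M ^\<^sub>m Suc b = (M ^\<^sub>m a * M ^\<^sub>m b) * M" using M by (simp add: assoc_mult_mat[of _ n n _ n _ n])
  then show ?case using Suc by simp
qed

lemma pow_mat_Suc_left:
  fixes M :: "'a::semiring_1 mat"
  assumes M: "M \<in> carrier_mat n n"
  shows "M ^\<^sub>m Suc k = M * M ^\<^sub>m k"
  using pow_mat_add[OF M, of 1 k] M by simp

lemma assoc_dim[simp]: "dim_col A = dim_row B \<Longrightarrow> dim_col B = dim_row C \<Longrightarrow> A * B * C = A * (B * C)"
  by (rule assoc_mult_mat[of A "dim_row A" "dim_col A" B "dim_col B" C "dim_col C"], auto)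

declare assoc_mult_mat[simp del]
declare pow_mat.simps(2)[simp del]

locale mcancel =
  fixes A B M :: "'a::field mat" and m n :: nat
  assumes A: "A \<in> carrier_mat m n" and B: "B \<in> carrier_mat n m"
  and M_def: "M = B * A"
  and L1: "\<And>Z Z'. dim_row Z = n \<Longrightarrow> dim_row Z' = n \<Longrightarrow> dim_col Z = dim_col Z' \<Longrightarrow> B * (A * Z) = B * (A * Z') \<Longrightarrow> A * Z = A * Z'"
  and L2: "\<And>Z Z'. dim_row Z = m \<Longrightarrow> dim_row Z' = m \<Longrightarrow> dim_col Z = dim_col Z' \<Longrightarrow> A * (B * Z) = A * (B * Z') \<Longrightarrow> B * Z = B * Z'"
  and R1: "\<And>Z Z'. dim_col Z = n \<Longrightarrow> dim_col Z' = n \<Longrightarrow> dim_row Z = dim_row Z' \<Longrightarrow> Z * (B * A) = Z' * (B * A) \<Longrightarrow> Z * B = Z' * B"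
  and R2: "\<And>Z Z'. dim_col Z = m \<Longrightarrow> dim_col Z' = m \<Longrightarrow> dim_row Z = dim_row Z' \<Longrightarrow> Z * (A * B) = Z' * (A * B) \<Longrightarrow> Z * A = Z' * A"
begin

lemma M: "M \<in> carrier_mat n n" unfolding M_def using A B by simp

lemma dims[simp]: "dim_row A = m" "dim_col A = n" "dim_row B = n" "dim_col B = m"
  "dim_row M = n" "dim_col M = n"
  using A B M by auto

lemma MZ: "dim_row Z = n \<Longrightarrow> M * Z = B * (A * Z)"
  unfolding M_def by simp

lemma D1: "dim_row W = m \<Longrightarrow> dim_row W' = m \<Longrightarrow> dim_col W = dim_col W' \<Longrightarrow>
  M ^\<^sub>m j * (B * W) = M ^\<^sub>m j * (B * W') \<Longrightarrow> B * W = B * W'"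
proof (induction j arbitrary: W W')
  case 0 then show ?case by simp
next
  case (Suc j)
  have e: "M ^\<^sub>m Suc j * (B * V) = M ^\<^sub>m j * (B * (A * (B * V)))" if "dim_row V = m" for V
    using that by (simp add: MZ pow_mat.simps(2))
  have "B * (A * (B * W)) = B * (A * (B * W'))"
    by (rule Suc.IH, insert Suc.prems e, simp_all)
  hence "A * (B * W) = A * (B * W')" by (intro L1, insert Suc.prems, simp_all)
  thus ?case by (intro L2, insert Suc.prems, simp_all)
qed

lemma D2: "dim_col W = m \<Longrightarrow> dim_col W' = m \<Longrightarrow> dim_row W = dim_row W' \<Longrightarrow>
  W * (A * M ^\<^sub>m j) = W' * (A * M ^\<^sub>m j) \<Longrightarrow> W * A = W' * A"
proof (induction j arbitrary: W W')
  case 0 then show ?case by simp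
next
  case (Suc j)
  have e: "V * (A * M ^\<^sub>m Suc j) = (V * A * B) * (A * M ^\<^sub>m j)" if "dim_col V = m" for V
  proof -
    have "V * (A * M ^\<^sub>m Suc j) = V * (A * (M * M ^\<^sub>m j))" using pow_mat_Suc_left[OF M] by simp
    also have "\<dots> = (V * A * B) * (A * M ^\<^sub>m j)" using that by (simp add: MZ)
    finally show ?thesis .
  qed
  have "(W * A * B) * A = (W' * A * B) * A"
    by (rule Suc.IH, insert Suc.prems e, simp_all)
  hence "(W * A) * (B * A) = (W' * A) * (B * A)" using Suc.prems by simp
  hence "(W * A) * B = (W' * A) * B" by (intro R1, insert Suc.prems, simp_all)
  hence "W * (A * B) = W' * (A * B)" using Suc.prems by simp
  thus ?case by (intro R2, insert Suc.prems, simp_all)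
qed

lemma pp: "M ^\<^sub>m a * M ^\<^sub>m b = M ^\<^sub>m (a + b)" using pow_mat_add[OF M] .

lemma ppZ: "dim_row Z = n \<Longrightarrow> M ^\<^sub>m a * (M ^\<^sub>m b * Z) = M ^\<^sub>m (a + b) * Z"
proof -
  assume "dim_row Z = n"
  hence "M ^\<^sub>m a * (M ^\<^sub>m b * Z) = (M ^\<^sub>m a * M ^\<^sub>m b) * Z" by simp
  thus ?thesis by (simp add: pp)
qed

lemma pBA: "M ^\<^sub>m a * (B * A) = M ^\<^sub>m (Suc a)"
  using pp[of a 1] M_def by (simp add: pow_mat.simps(2))

lemma pBAZ: "dim_row Z = n \<Longrightarrow> M ^\<^sub>m a * (B * (A * Z)) = M ^\<^sub>m (Suc a) * Z"
proof -
  assume "dim_row Z = n"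
  hence "M ^\<^sub>m a * (B * (A * Z)) = (M ^\<^sub>m a * (B * A)) * Z" by simp
  thus ?thesis by (simp add: pBA)
qed

lemma AYA:
  assumes Xd: "dim_row X = m" "dim_col X = n"
  and H: "(M ^\<^sub>m (k+l+1) * B) * X * (M ^\<^sub>m (k+l+1) * B) = M ^\<^sub>m (k+l+1) * B"
  shows "A * (M ^\<^sub>m k * B * X * M ^\<^sub>m l * B) * A = A"
proof -
  define s where "s = Suc (l + k)"
  define Y where "Y = M ^\<^sub>m k * B * X * M ^\<^sub>m l * B"
  have kl: "k + l + 1 = s" unfolding s_def by simp
  have Yd: "dim_row Y = n" "dim_col Y = m" unfolding Y_def using Xd by simp_all
  have H0: "(M ^\<^sub>m s * B) * X * (M ^\<^sub>m s * B) = M ^\<^sub>m s * B" using H unfolding kl .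
  have H': "M ^\<^sub>m s * (B * (X * (M ^\<^sub>m s * B))) = M ^\<^sub>m s * B"
  proof -
    have "M ^\<^sub>m s * (B * (X * (M ^\<^sub>m s * B))) = (M ^\<^sub>m s * B) * X * (M ^\<^sub>m s * B)"
      using Xd by simp
    also have "\<dots> = M ^\<^sub>m s * B" by (rule H0)
    finally show ?thesis .
  qed
  have "M ^\<^sub>m l * B * A * Y * (A * M ^\<^sub>m (Suc k)) = M ^\<^sub>m s * (B * (X * M ^\<^sub>m (Suc s)))"
    unfolding Y_def s_def using Xd by (simp add: pBAZ ppZ pp)
  also have "\<dots> = M ^\<^sub>m s * (B * (X * (M ^\<^sub>m s * (B * A))))"
    by (simp only: pBA)
  also have "\<dots> = (M ^\<^sub>m s * (B * (X * (M ^\<^sub>m s * B)))) * A"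
    using Xd by simp
  also have "\<dots> = M ^\<^sub>m s * B * A" by (simp only: H')
  also have "\<dots> = M ^\<^sub>m (Suc s)" by (simp add: pBA)
  also have "\<dots> = M ^\<^sub>m l * B * (A * M ^\<^sub>m (Suc k))"
    unfolding s_def by (simp add: pBAZ pp)
  finally have "(M ^\<^sub>m l * B * A * Y) * A = (M ^\<^sub>m l * B) * A"
    by (intro D2, insert Yd, simp_all)
  hence "M ^\<^sub>m l * (B * (A * Y * A)) = M ^\<^sub>m l * (B * A)" using Yd by simp
  hence "B * (A * Y * A) = B * A" by (intro D1, insert Yd, simp_all)
  hence "B * (A * (Y * A)) = B * (A * 1\<^sub>m n)" using Yd by simp
  hence "A * (Y * A) = A * 1\<^sub>m n" by (intro L1, insert Yd, simp_all)
  thus ?thesis unfolding Y_def[symmetric] using Yd by simp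
qed

end

lemma adjm: "dim_col P = dim_row Q \<Longrightarrow> mink_adj (P * Q) = mink_adj Q * mink_adj P"
  by (rule mink_adj_mult[of P "dim_row P" "dim_col P" Q "dim_col Q"], auto)

lemma mat_cancel_from_vec:
  fixes F G :: "'a::field mat"
  assumes F: "F \<in> carrier_mat s k" and G: "G \<in> carrier_mat r k"
  and imp: "\<And>x. x \<in> carrier_vec k \<Longrightarrow> F *\<^sub>v x = 0\<^sub>v s \<Longrightarrow> G *\<^sub>v x = 0\<^sub>v r"
  and Z: "Z \<in> carrier_mat k c" and Z': "Z' \<in> carrier_mat k c"
  and eq: "F * Z = F * Z'"
  shows "G * Z = G * Z'"
proof (rule eq_matI)
  fix i j assume i: "i < dim_row (G * Z')" and j: "j < dim_col (G * Z')"
  have i': "i < r" and j': "j < c" using i j G Z' by auto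
  define x where "x = col Z j - col Z' j"
  have cz: "col Z j \<in> carrier_vec k" "col Z' j \<in> carrier_vec k" using Z Z' by auto
  have x: "x \<in> carrier_vec k" unfolding x_def using cz by auto
  have "F *\<^sub>v x = col (F * Z) j - col (F * Z') j"
    unfolding x_def using mult_minus_distrib_mat_vec[OF F cz] col_mult2[OF F Z j'] col_mult2[OF F Z' j'] by simp
  also have "\<dots> = 0\<^sub>v s" unfolding eq using F Z' j' by (intro eq_vecI, auto)
  finally have "G *\<^sub>v x = 0\<^sub>v r" using imp x by auto
  hence "(G *\<^sub>v x) $ i = 0" using i' by simp
  hence "row G i \<bullet> (col Z j - col Z' j) = 0" unfolding x_def using i' G by simp
  hence "row G i \<bullet> col Z j - row G i \<bullet> col Z' j = 0"
    using scalar_prod_minus_distrib[of "row G i" k "col Z j" "col Z' j"] G i' cz by auto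
  thus "(G * Z) $$ (i, j) = (G * Z') $$ (i, j)" using i' j' G Z Z' by simp
qed (insert G Z Z', auto)

lemma pow_shift:
  fixes A B :: "'a::semiring_1 mat"
  assumes A: "A \<in> carrier_mat m n" and B: "B \<in> carrier_mat n m"
  shows "(B * A) ^\<^sub>m k * B = B * (A * B) ^\<^sub>m k"
proof (induction k)
  case 0 then show ?case using A B by simp
next
  case (Suc k)
  have d: "dim_row A = m" "dim_col A = n" "dim_row B = n" "dim_col B = m" using A B by auto
  have "(B * A) ^\<^sub>m Suc k * B = (B * A) ^\<^sub>m k * (B * (A * B))"
    using d by (simp add: pow_mat.simps(2))
  also have "\<dots> = ((B * A) ^\<^sub>m k * B) * (A * B)"
    using d by simp
  also have "\<dots> = B * (A * B) ^\<^sub>m Suc k"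
    unfolding Suc using d by (simp add: pow_mat.simps(2))
  finally show ?case .
qed

lemma mink_inverse_unique:
  assumes A: "A \<in> carrier_mat m n" and X1: "is_mink_inverse A X1" and X2: "is_mink_inverse A X2"
  shows "X1 = X2"
proof -
  have c1: "X1 \<in> carrier_mat n m" and c2: "X2 \<in> carrier_mat n m"
    using X1 X2 A unfolding is_mink_inverse_def by auto
  have d: "dim_row X1 = n" "dim_col X1 = m" "dim_row X2 = n" "dim_col X2 = m" "dim_row A = m" "dim_col A = n"
    using c1 c2 A by auto
  have e1: "A * X1 * A = A" "X1 * A * X1 = X1" "mink_adj (A * X1) = A * X1" "mink_adj (X1 * A) = X1 * A"
    using X1 unfolding is_mink_inverse_def by auto
  have e2: "A * X2 * A = A" "X2 * A * X2 = X2" "mink_adj (A * X2) = A * X2" "mink_adj (X2 * A) = X2 * A"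
    using X2 unfolding is_mink_inverse_def by auto
  have adjA: "mink_adj A * mink_adj X2 * mink_adj A = mink_adj A"
  proof -
    have "mink_adj A * mink_adj X2 * mink_adj A = mink_adj (A * X2 * A)" using d by (simp add: adjm)
    thus ?thesis by (simp only: e2(1))
  qed
  have adjA': "mink_adj A * mink_adj X1 * mink_adj A = mink_adj A"
  proof -
    have "mink_adj A * mink_adj X1 * mink_adj A = mink_adj (A * X1 * A)" using d by (simp add: adjm)
    thus ?thesis by (simp only: e1(1))
  qed
  have "X1 = X1 * A * X1" by (simp only: e1(2))
  also have "\<dots> = X1 * (mink_adj (A * X1))" using d by (simp add: e1(3))
  also have "\<dots> = X1 * (mink_adj X1 * mink_adj A)" using d by (simp add: adjm)
  also have "\<dots> = X1 * (mink_adj X1 * (mink_adj A * mink_adj X2 * mink_adj A))"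
    by (simp only: adjA)
  also have "\<dots> = X1 * ((mink_adj X1 * mink_adj A) * (mink_adj X2 * mink_adj A))"
    using d by simp
  also have "\<dots> = X1 * (mink_adj (A * X1) * mink_adj (A * X2))" using d by (simp add: adjm)
  also have "\<dots> = (X1 * A * X1) * A * X2" unfolding e1(3) e2(3) using d by simp
  also have "\<dots> = X1 * A * X2" by (simp only: e1(2))
  finally have 1: "X1 = X1 * A * X2" .
  have "X2 = X2 * A * X2" by (simp only: e2(2))
  also have "\<dots> = mink_adj (X2 * A) * X2" using d by (simp add: e2(4))
  also have "\<dots> = (mink_adj A * mink_adj X2) * X2" using d by (simp add: adjm)
  also have "\<dots> = ((mink_adj A * mink_adj X1 * mink_adj A) * mink_adj X2) * X2"
    by (simp only: adjA')
  also have "\<dots> = ((mink_adj A * mink_adj X1) * (mink_adj A * mink_adj X2)) * X2"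
    using d by simp
  also have "\<dots> = (mink_adj (X1 * A) * mink_adj (X2 * A)) * X2" using d by (simp add: adjm)
  also have "\<dots> = X1 * A * (X2 * A * X2)" unfolding e1(4) e2(4) using d by simp
  also have "\<dots> = X1 * A * X2" by (simp only: e2(2))
  finally have 2: "X2 = X1 * A * X2" .
  show ?thesis by (rule trans[OF 1 2[symmetric]])
qed

theorem theorem8p1:
  fixes A X :: "complex mat" and m n k l :: nat
  assumes "0 < m" and "0 < n"
    and "A \<in> carrier_mat m n"
    and "crank (A * mink_adj A) = crank A"
    and "crank (mink_adj A * A) = crank A"
    and "X \<in> carrier_mat m n"
    and "((mink_adj A * A) ^\<^sub>m (k + l + 1) * mink_adj A) * X
           * ((mink_adj A * A) ^\<^sub>m (k + l + 1) * mink_adj A)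
         = (mink_adj A * A) ^\<^sub>m (k + l + 1) * mink_adj A"
  shows "mink_inverse A
         = (mink_adj A * A) ^\<^sub>m k * mink_adj A * X * (mink_adj A * A) ^\<^sub>m l * mink_adj A"
proof -
  note A = assms(3)
  define B where "B = mink_adj A"
  have B: "B \<in> carrier_mat n m" unfolding B_def by (rule mink_adj_carrier[OF A])
  have AB: "mink_adj B = A" unfolding B_def by simp
  have dA: "dim_row A = m" "dim_col A = n" "dim_row B = n" "dim_col B = m" using A B by auto
  have r1: "vec_space.rank m (A * B) = vec_space.rank m A"
    using assms(4) dA unfolding crank_def B_def[symmetric] by simp
  have r2: "vec_space.rank n (B * A) = vec_space.rank m A"
    using assms(5) dA unfolding crank_def B_def[symmetric] by simp
  have L1: "A * Z = A * Z'" if Z: "dim_row Z = n" and Z': "dim_row Z' = n" and c: "dim_col Z = dim_col Z'"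
    and eq: "B * (A * Z) = B * (A * Z')" for Z Z'
  proof (rule mat_cancel_from_vec[of "B * A" n n A m _ "dim_col Z"])
    show "B * A \<in> carrier_mat n n" "A \<in> carrier_mat m n" using A B by auto
    show "\<And>x. x \<in> carrier_vec n \<Longrightarrow> B * A *\<^sub>v x = 0\<^sub>v n \<Longrightarrow> A *\<^sub>v x = 0\<^sub>v m"
      using rank_mult_inj[OF B A r2] A B by (simp add: assoc_mult_mat_vec)
    show "B * A * Z = B * A * Z'" using eq Z Z' dA by simp
    show "Z \<in> carrier_mat n (dim_col Z)" using Z by (intro carrier_matI, auto)
    show "Z' \<in> carrier_mat n (dim_col Z)" using Z' c by (intro carrier_matI, auto)
  qed
  from rank_mult_col[OF A B r1] obtain V where V: "V \<in> carrier_mat m n" and AV: "A = A * B * V" ..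
  have dV: "dim_row V = m" "dim_col V = n" using V by auto
  have R2: "Z * A = Z' * A" if Z: "dim_col Z = m" and Z': "dim_col Z' = m" and c: "dim_row Z = dim_row Z'"
    and eq: "Z * (A * B) = Z' * (A * B)" for Z Z'
  proof -
    have "Z * A = Z * (A * B * V)" by (rule arg_cong[where f="\<lambda>x. Z * x", OF AV])
    also have "\<dots> = (Z * (A * B)) * V" using Z dV dA by simp
    also have "\<dots> = (Z' * (A * B)) * V" unfolding eq ..
    also have "\<dots> = Z' * (A * B * V)" using Z' dV dA by simp
    also have "\<dots> = Z' * A" by (rule arg_cong[where f="\<lambda>x. Z' * x", OF AV[symmetric]])
    finally show ?thesis .
  qed
  have R1: "Z * B = Z' * B" if Z: "dim_col Z = n" and Z': "dim_col Z' = n" and c: "dim_row Z = dim_row Z'"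
    and eq: "Z * (B * A) = Z' * (B * A)" for Z Z'
  proof -
    have "mink_adj (Z * (B * A)) = B * (A * mink_adj Z)"
      using Z dA by (simp add: adjm AB B_def[symmetric])
    moreover have "mink_adj (Z' * (B * A)) = B * (A * mink_adj Z')"
      using Z' dA by (simp add: adjm AB B_def[symmetric])
    ultimately have "B * (A * mink_adj Z) = B * (A * mink_adj Z')" using eq by simp
    hence "A * mink_adj Z = A * mink_adj Z'"
      by (intro L1, insert Z Z' c, simp_all)
    hence "mink_adj (A * mink_adj Z) = mink_adj (A * mink_adj Z')" by simp
    thus ?thesis using Z Z' dA by (simp add: adjm B_def[symmetric])
  qed
  have L2: "B * Z = B * Z'" if Z: "dim_row Z = m" and Z': "dim_row Z' = m" and c: "dim_col Z = dim_col Z'"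
    and eq: "A * (B * Z) = A * (B * Z')" for Z Z'
  proof -
    have "mink_adj (A * (B * Z)) = mink_adj Z * (A * B)"
      using Z dA by (simp add: adjm AB B_def[symmetric])
    moreover have "mink_adj (A * (B * Z')) = mink_adj Z' * (A * B)"
      using Z' dA by (simp add: adjm AB B_def[symmetric])
    ultimately have "mink_adj Z * (A * B) = mink_adj Z' * (A * B)" using eq by simp
    hence "mink_adj Z * A = mink_adj Z' * A"
      by (intro R2, insert Z Z' c, simp_all)
    hence "mink_adj (mink_adj Z * A) = mink_adj (mink_adj Z' * A)" by simp
    thus ?thesis using Z Z' dA by (simp add: adjm B_def[symmetric])
  qed
  interpret mc: mcancel A B "B * A" m n
    by (rule mcancel.intro[OF A B refl L1 L2 R1 R2])
  define Y where "Y = (B * A) ^\<^sub>m k * B * X * (B * A) ^\<^sub>m l * B"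
  have X: "X \<in> carrier_mat m n" by (rule assms(6))
  have dX: "dim_row X = m" "dim_col X = n" using X by auto
  have H: "((B * A) ^\<^sub>m (k + l + 1) * B) * X * ((B * A) ^\<^sub>m (k + l + 1) * B) = (B * A) ^\<^sub>m (k + l + 1) * B"
    using assms(7) unfolding B_def .
  have AYA: "A * Y * A = A" unfolding Y_def by (rule mc.AYA[OF dX H])
  have Y: "Y \<in> carrier_mat n m" unfolding Y_def using dX dA by (intro carrier_matI, simp_all)
  have dY: "dim_row Y = n" "dim_col Y = m" using Y by auto
  define T where "T = (B * A) ^\<^sub>m k * B * X * (B * A) ^\<^sub>m l"
  have YT: "Y = T * B" unfolding Y_def T_def by simp
  have dT: "dim_row T = n" "dim_col T = n" unfolding T_def using dX dA by auto
  define S where "S = (A * B) ^\<^sub>m k * X * (B * A) ^\<^sub>m l * B"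
  have YS: "Y = B * S"
  proof -
    have "Y = ((B * A) ^\<^sub>m k * B) * (X * ((B * A) ^\<^sub>m l * B))" unfolding Y_def using dX dA by simp
    also have "\<dots> = (B * (A * B) ^\<^sub>m k) * (X * ((B * A) ^\<^sub>m l * B))" unfolding pow_shift[OF A B] ..
    also have "\<dots> = B * S" unfolding S_def using dX dA by simp
    finally show ?thesis .
  qed
  have dS: "dim_row S = m" "dim_col S = m" unfolding S_def using dX dA by auto
  have BAY: "B = B * mink_adj (A * Y)"
  proof -
    have "B = mink_adj (A * Y * A)" unfolding AYA B_def ..
    also have "\<dots> = B * mink_adj (A * Y)" using dY dA by (simp add: adjm B_def[symmetric])
    finally show ?thesis .
  qed
  have BYA: "B = mink_adj (Y * A) * B"
  proof -
    have "B = mink_adj (A * (Y * A))" using AYA dY dA unfolding B_def by simp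
    also have "\<dots> = mink_adj (Y * A) * B" using dY dA by (simp add: adjm B_def[symmetric])
    finally show ?thesis .
  qed
  have AYe: "A * Y = A * Y * mink_adj (A * Y)"
  proof -
    have "A * Y = A * (T * B)" by (simp only: YT)
    also have "\<dots> = A * (T * (B * mink_adj (A * Y)))" by (simp only: BAY[symmetric])
    also have "\<dots> = A * (T * B) * mink_adj (A * Y)" using dT dA dY by simp
    also have "\<dots> = A * Y * mink_adj (A * Y)" by (simp only: YT)
    finally show ?thesis .
  qed
  have sa1: "mink_adj (A * Y) = A * Y"
  proof -
    have "mink_adj (A * Y) = mink_adj (A * Y * mink_adj (A * Y))" using AYe by (rule arg_cong)
    also have "\<dots> = A * Y * mink_adj (A * Y)" using dY dA by (simp add: adjm)
    also have "\<dots> = A * Y" by (rule AYe[symmetric])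
    finally show ?thesis .
  qed
  have YAe: "Y * A = mink_adj (Y * A) * (Y * A)"
  proof -
    have "Y * A = (B * S) * A" by (simp only: YS)
    also have "\<dots> = (mink_adj (Y * A) * B) * S * A" by (simp only: BYA[symmetric])
    also have "\<dots> = mink_adj (Y * A) * ((B * S) * A)" using dS dA dY by simp
    also have "\<dots> = mink_adj (Y * A) * (Y * A)" by (simp only: YS)
    finally show ?thesis .
  qed
  have sa2: "mink_adj (Y * A) = Y * A"
  proof -
    have "mink_adj (Y * A) = mink_adj (mink_adj (Y * A) * (Y * A))" using YAe by (rule arg_cong)
    also have "\<dots> = mink_adj (Y * A) * (Y * A)" using dY dA by (simp add: adjm)
    also have "\<dots> = Y * A" by (rule YAe[symmetric])
    finally show ?thesis .
  qed
  have YAY: "Y * A * Y = Y"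
  proof -
    have "Y = T * B" by (rule YT)
    also have "\<dots> = T * (B * mink_adj (A * Y))" by (simp only: BAY[symmetric])
    also have "\<dots> = T * (B * (A * Y))" by (simp only: sa1)
    also have "\<dots> = (T * B) * A * Y" using dT dA dY by simp
    also have "\<dots> = Y * A * Y" by (simp only: YT)
    finally show ?thesis by (rule sym)
  qed
  have inv: "is_mink_inverse A Y"
    unfolding is_mink_inverse_def
  proof (intro conjI)
    show "Y \<in> carrier_mat (dim_col A) (dim_row A)" using Y dA by simp
  qed (rule AYA YAY sa1 sa2)+
  have "mink_inverse A = Y"
    unfolding mink_inverse_def
    by (rule the_equality[of "is_mink_inverse A" Y, OF inv]) (rule mink_inverse_unique[OF A _ inv], assumption)
  thus ?thesis unfolding Y_def B_def .
qed

end
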